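(* Let the labels $\{1,\dots,k\}$ be partitioned into $b\ge2$ blocks all of size $s=k/b\ge2$, let $L_{01}(i,j)=[i\ne j]$, $L_{01,b}(i,j)=[i\text{ and }j\text{ not in the same block}]$, and for $0\le\eta\le1$ let $L_{01,b,\eta}=\eta L_{01}+(1-\eta)L_{01,b}$, with quadratic surrogate $\Phi_{quad}(f,y)=\frac1{2k}\|f+L_{01,b,\eta}(:,y)\|_2^2$. If the scores are constrained to be equal inside the blocks, i.e. to lie in $\mathcal{F}_{01,b}=\mathrm{span}(L_{01,b})$, then $$H_{\Phi_{quad},L_{01,b,\eta},\mathcal{F}_{01,b}}(\varepsilon)=\begin{cases}\dfrac{(\varepsilon-\frac\eta2)^2}{4b}\cdot\dfrac{(\frac{\eta b}{k}+1-\eta)^2}{(1-\frac\eta2)^2}, & \frac\eta2\le\varepsilon\le1,\\[2mm] 0, & 0\le\varepsilon\le\frac\eta2,\end{cases}$$ so the surrogate is consistent up to level $\frac\eta2$.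
   Context: $\mathrm{span}(L)$ is the column space. $\mathrm{pred}(f)$ is the smallest index maximizing $f_c$. For $q\in\Delta_k$: $\ell(f,q)=\sum_cq_cL(\mathrm{pred}(f),c)$, $\phi(f,q)=\sum_cq_c\Phi(f,c)$, $\delta\ell(f,q)=\ell(f,q)-\inf_{\hat f\in\mathcal{F}}\ell(\hat f,q)$, $\delta\phi(f,q)=\phi(f,q)-\inf_{\hat f\in\mathcal{F}}\phi(\hat f,q)$; calibration function $H_{\Phi,L,\mathcal{F}}(\varepsilon)=\inf\{\delta\phi(f,q):f\in\mathcal{F},q\in\Delta_k,\delta\ell(f,q)\ge\varepsilon\}$ ($+\infty$ if empty). A surrogate is consistent up to level $\eta'\ge0$ if $H(\varepsilon)>0$ for all $\varepsilon>\eta'$ and $H(\hat\varepsilon)$ is finite for some $\hat\varepsilon>\eta'$. *)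

theory Defs
  imports "HOL-Analysis.Analysis"
begin

text \<open>Labels are 0..k-1 (the paper's 1..k shifted by one; order preserved).
  Score vectors, loss columns and distributions are functions nat => real,
  only their values below k matter.  A loss matrix is L :: nat => nat => real,
  L i j = loss of predicting i when the true label is j.\<close>

definition pred :: "nat \<Rightarrow> (nat \<Rightarrow> real) \<Rightarrow> nat" where
  "pred k f = (LEAST c. c < k \<and> (\<forall>c'<k. f c' \<le> f c))"

definition label_simplex :: "nat \<Rightarrow> (nat \<Rightarrow> real) set" where
  "label_simplex k = {q. (\<forall>c<k. 0 \<le> q c) \<and> (\<Sum>c<k. q c) = 1 \<and> (\<forall>c\<ge>k. q c = 0)}"

definition col_span :: "nat \<Rightarrow> (nat \<Rightarrow> nat \<Rightarrow> real) \<Rightarrow> (nat \<Rightarrow> real) set" where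
  "col_span k L = {f. (\<exists>\<alpha>::nat \<Rightarrow> real. \<forall>c<k. f c = (\<Sum>j<k. \<alpha> j * L c j)) \<and> (\<forall>c\<ge>k. f c = 0)}"

definition lossq :: "nat \<Rightarrow> (nat \<Rightarrow> nat \<Rightarrow> real) \<Rightarrow> (nat \<Rightarrow> real) \<Rightarrow> (nat \<Rightarrow> real) \<Rightarrow> real" where
  "lossq k L f q = (\<Sum>c<k. q c * L (pred k f) c)"

definition phiq :: "nat \<Rightarrow> ((nat \<Rightarrow> real) \<Rightarrow> nat \<Rightarrow> real) \<Rightarrow> (nat \<Rightarrow> real) \<Rightarrow> (nat \<Rightarrow> real) \<Rightarrow> real" where
  "phiq k \<Phi> f q = (\<Sum>c<k. q c * \<Phi> f c)"

definition excess_loss :: "nat \<Rightarrow> (nat \<Rightarrow> nat \<Rightarrow> real) \<Rightarrow> (nat \<Rightarrow> real) set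
    \<Rightarrow> (nat \<Rightarrow> real) \<Rightarrow> (nat \<Rightarrow> real) \<Rightarrow> ereal" where
  "excess_loss k L F f q = ereal (lossq k L f q) - (INF g\<in>F. ereal (lossq k L g q))"

definition excess_phi :: "nat \<Rightarrow> ((nat \<Rightarrow> real) \<Rightarrow> nat \<Rightarrow> real) \<Rightarrow> (nat \<Rightarrow> real) set
    \<Rightarrow> (nat \<Rightarrow> real) \<Rightarrow> (nat \<Rightarrow> real) \<Rightarrow> ereal" where
  "excess_phi k \<Phi> F f q = ereal (phiq k \<Phi> f q) - (INF g\<in>F. ereal (phiq k \<Phi> g q))"

text \<open>Calibration function H (value +infinity when the set is empty).\<close>
definition calib :: "nat \<Rightarrow> ((nat \<Rightarrow> real) \<Rightarrow> nat \<Rightarrow> real) \<Rightarrow> (nat \<Rightarrow> nat \<Rightarrow> real)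
    \<Rightarrow> (nat \<Rightarrow> real) set \<Rightarrow> real \<Rightarrow> ereal" where
  "calib k \<Phi> L F \<epsilon> = Inf {excess_phi k \<Phi> F f q | f q.
       f \<in> F \<and> q \<in> label_simplex k \<and> excess_loss k L F f q \<ge> ereal \<epsilon>}"

definition consistent_upto :: "nat \<Rightarrow> ((nat \<Rightarrow> real) \<Rightarrow> nat \<Rightarrow> real) \<Rightarrow> (nat \<Rightarrow> nat \<Rightarrow> real)
    \<Rightarrow> (nat \<Rightarrow> real) set \<Rightarrow> real \<Rightarrow> bool" where
  "consistent_upto k \<Phi> L F \<eta>' \<longleftrightarrow>
     (\<forall>\<epsilon>>\<eta>'. calib k \<Phi> L F \<epsilon> > 0) \<and>
     (\<exists>\<epsilon>'>\<eta>'. \<bar>calib k \<Phi> L F \<epsilon>'\<bar> \<noteq> \<infinity>)"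

definition L01 :: "nat \<Rightarrow> nat \<Rightarrow> real" where
  "L01 i j = (if i \<noteq> j then 1 else 0)"

definition L01b :: "(nat \<Rightarrow> nat) \<Rightarrow> nat \<Rightarrow> nat \<Rightarrow> real" where
  "L01b blk i j = (if blk i \<noteq> blk j then 1 else 0)"

definition L01b_eta :: "(nat \<Rightarrow> nat) \<Rightarrow> real \<Rightarrow> nat \<Rightarrow> nat \<Rightarrow> real" where
  "L01b_eta blk \<eta> i j = \<eta> * L01 i j + (1 - \<eta>) * L01b blk i j"

definition Phi_quad :: "nat \<Rightarrow> (nat \<Rightarrow> nat \<Rightarrow> real) \<Rightarrow> (nat \<Rightarrow> real) \<Rightarrow> nat \<Rightarrow> real" where
  "Phi_quad k L f y = (1 / (2 * real k)) * (\<Sum>c<k. (f c + L c y)\<^sup>2)"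

end

theory Submission
  imports Defs
begin

locale P17 =
  fixes k b s :: nat and blk :: "nat \<Rightarrow> nat" and \<eta> :: real
  assumes b2: "b \<ge> 2" and s2: "s \<ge> 2" and kbs: "k = b * s"
    and blk_lt: "\<forall>c<k. blk c < b"
    and card_blk: "\<forall>j<b. card {c. c < k \<and> blk c = j} = s"
    and eta0: "0 \<le> \<eta>" and eta1: "\<eta> \<le> 1"
begin

definition Q :: "(nat \<Rightarrow> real) \<Rightarrow> nat \<Rightarrow> real" where
  "Q q j = (\<Sum>c\<in>{c. c < k \<and> blk c = j}. q c)"

lemma kpos: "k > 0" using b2 s2 kbs by simp

lemma group: "(\<Sum>c<k. h (blk c) * q c) = (\<Sum>j<b. h j * Q q j)"
proof -
  have "(\<Sum>c<k. h (blk c) * q c) = (\<Sum>j\<in>{..<b}. \<Sum>c\<in>{c. c \<in> {..<k} \<and> blk c = j}. h (blk c) * q c)"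
    by (rule sum.group[symmetric]) (use blk_lt in auto)
  also have "\<dots> = (\<Sum>j<b. h j * Q q j)" unfolding Q_def sum_distrib_left
    by (intro sum.cong refl) auto
  finally show ?thesis .
qed

lemma group1: "(\<Sum>c<k. h (blk c)) = (\<Sum>j<b. real s * h j)"
proof -
  have "(\<Sum>c<k. h (blk c)) = (\<Sum>c<k. h (blk c) * (\<lambda>_. 1) c)" by simp
  also have "\<dots> = (\<Sum>j<b. h j * Q (\<lambda>_. 1) j)" by (rule group)
  also have "\<dots> = (\<Sum>j<b. real s * h j)" unfolding Q_def using card_blk by (intro sum.cong) auto
  finally show ?thesis .
qed

lemma F_char: "f \<in> col_span k (L01b blk) \<longleftrightarrow> (\<exists>h. \<forall>c<k. f c = h (blk c)) \<and> (\<forall>c\<ge>k. f c = 0)"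
proof
  assume "f \<in> col_span k (L01b blk)"
  then obtain a where a: "\<forall>c<k. f c = (\<Sum>j<k. a j * L01b blk c j)" and z: "\<forall>c\<ge>k. f c = 0"
    unfolding col_span_def by auto
  define h0 where "h0 B = (\<Sum>j<k. a j * (if B \<noteq> blk j then 1 else 0))" for B
  have hh: "\<forall>c<k. f c = h0 (blk c)"
    using a unfolding L01b_def h0_def by simp
  show "(\<exists>h. \<forall>c<k. f c = h (blk c)) \<and> (\<forall>c\<ge>k. f c = 0)"
    using hh z by (intro conjI exI[of _ h0])
next
  assume "(\<exists>h. \<forall>c<k. f c = h (blk c)) \<and> (\<forall>c\<ge>k. f c = 0)"
  then obtain h where h: "\<forall>c<k. f c = h (blk c)" and z: "\<forall>c\<ge>k. f c = 0" by blast
  define H where "H = (\<Sum>B<b. h B)"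
  define \<beta> where "\<beta> B = H / (real b - 1) - h B" for B
  define a where "a j = \<beta> (blk j) / real s" for j
  have "f c = (\<Sum>j<k. a j * L01b blk c j)" if c: "c < k" for c
  proof -
    have bc: "blk c < b" using blk_lt c by auto
    have "(\<Sum>j<k. a j * L01b blk c j) = (\<Sum>j<k. (\<lambda>B. \<beta> B / real s * (if blk c \<noteq> B then 1 else 0)) (blk j))"
      by (simp add: a_def L01b_def eq_commute)
    also have "\<dots> = (\<Sum>B<b. real s * (\<beta> B / real s * (if blk c \<noteq> B then 1 else 0)))"
      by (rule group1)
    also have "\<dots> = (\<Sum>B<b. \<beta> B * (if blk c \<noteq> B then 1 else 0))"
      using s2 by (intro sum.cong) auto
    also have "\<dots> = (\<Sum>B<b. \<beta> B) - \<beta> (blk c)"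
    proof -
      have "(\<Sum>B<b. \<beta> B * (if blk c \<noteq> B then 1 else 0)) = (\<Sum>B<b. \<beta> B - (if B = blk c then \<beta> B else 0))"
        by (intro sum.cong) auto
      also have "\<dots> = (\<Sum>B<b. \<beta> B) - \<beta> (blk c)" using bc by (simp add: sum_subtractf)
      finally show ?thesis .
    qed
    also have "\<dots> = h (blk c)"
    proof -
      have "(\<Sum>B<b. \<beta> B) = real b * (H / (real b - 1)) - H"
        unfolding \<beta>_def H_def by (simp add: sum_subtractf)
      moreover have "real b - 1 \<noteq> 0" using b2 by simp
      ultimately show ?thesis unfolding \<beta>_def by (simp add: field_simps)
    qed
    finally show ?thesis using h c by simp
  qed
  then show "f \<in> col_span k (L01b blk)" unfolding col_span_def using z by blast
qed


abbreviation "FF \<equiv> col_span k (L01b blk)"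
abbreviation "LL \<equiv> L01b_eta blk \<eta>"

definition Lq :: "(nat \<Rightarrow> real) \<Rightarrow> nat \<Rightarrow> real" where
  "Lq q c = (\<Sum>y<k. q y * LL c y)"

lemma Q_filter: "(\<Sum>y<k. if blk y = j then q y else 0) = Q q j"
proof -
  have "(\<Sum>y<k. if blk y = j then q y else 0) = (\<Sum>y\<in>{y\<in>{..<k}. blk y = j}. q y)"
    by (rule sum.inter_filter[symmetric]) simp
  also have "{y\<in>{..<k}. blk y = j} = {c. c < k \<and> blk c = j}" by auto
  finally show ?thesis unfolding Q_def .
qed

lemma Lq_eq:
  assumes q: "q \<in> label_simplex k" and c: "c < k"
  shows "Lq q c = \<eta> * (1 - q c) + (1 - \<eta>) * (1 - Q q (blk c))"
proof -
  have s1: "(\<Sum>y<k. q y) = 1" using q unfolding label_simplex_def by auto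
  have "Lq q c = (\<Sum>y<k. \<eta> * q y + (1 - \<eta>) * q y - \<eta> * (if y = c then q y else 0)
         - (1 - \<eta>) * (if blk y = blk c then q y else 0))"
    unfolding Lq_def L01b_eta_def L01_def L01b_def by (intro sum.cong) (auto simp: algebra_simps)
  also have "\<dots> = \<eta> * (1 - q c) + (1 - \<eta>) * (1 - Q q (blk c))"
  proof -
    have d: "(\<Sum>y<k. if y = c then q y else 0) = q c" using c by simp
    show ?thesis
      by (simp add: sum.distrib sum_subtractf sum_distrib_left[symmetric] d Q_filter s1 algebra_simps)
  qed
  finally show ?thesis .
qed

lemma lossq_eq: "lossq k LL f q = Lq q (pred k f)"
  unfolding lossq_def Lq_def by (simp add: mult.commute)

lemma pred_props: "pred k f < k \<and> (\<forall>c'<k. f c' \<le> f (pred k f))"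
proof -
  define m where "m = Max (f ` {..<k})"
  have "m \<in> f ` {..<k}" unfolding m_def using kpos by (intro Max_in) auto
  then obtain c where c: "c < k" "f c = m" by auto
  have "\<forall>c'<k. f c' \<le> f c" using c unfolding m_def by auto
  then have ex: "\<exists>c. c < k \<and> (\<forall>c'<k. f c' \<le> f c)" using c by blast
  show ?thesis unfolding pred_def using LeastI_ex[OF ex] by blast
qed

lemma pred_least: "c' < k \<Longrightarrow> (\<forall>c''<k. f c'' \<le> f c') \<Longrightarrow> pred k f \<le> c'"
  unfolding pred_def by (rule Least_le) auto

lemma pred_blk:
  assumes f: "f \<in> FF" and c': "c' < k" and bb: "blk c' = blk (pred k f)"
  shows "pred k f \<le> c'"
proof -
  obtain h where h: "\<forall>c<k. f c = h (blk c)" using f F_char by blast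
  have "f c' = f (pred k f)" using h bb c' pred_props[of f] by auto
  then show ?thesis using pred_least[OF c'] pred_props[of f] by auto
qed

lemma zero_in_F: "(\<lambda>_. 0) \<in> FF"
  using F_char[of "\<lambda>_. 0"] by auto

lemma loss_INF:
  assumes q: "q \<in> label_simplex k"
  shows "\<exists>g\<in>FF. (INF g\<in>FF. ereal (lossq k LL g q)) = ereal (lossq k LL g q)"
proof -
  define A where "A = (\<lambda>g. ereal (lossq k LL g q)) ` FF"
  have sub: "A \<subseteq> (\<lambda>c. ereal (Lq q c)) ` {..<k}"
    unfolding A_def using pred_props by (auto simp: lossq_eq)
  have fin: "finite A" using finite_subset[OF sub] by auto
  have ne: "A \<noteq> {}" unfolding A_def using zero_in_F by auto
  have "Inf A \<in> A" using fin ne by (rule finite_Inf_in) (auto simp: inf_min min_def)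
  then show ?thesis unfolding A_def by auto
qed


definition R :: "(nat \<Rightarrow> real) \<Rightarrow> nat \<Rightarrow> real" where
  "R q c = (\<Sum>y<k. q y * (LL c y)\<^sup>2)"

abbreviation "PP \<equiv> Phi_quad k LL"

lemma phi_eq:
  assumes q: "q \<in> label_simplex k"
  shows "phiq k PP f q = (1 / (2 * real k)) * (\<Sum>c<k. (f c)\<^sup>2 + 2 * f c * Lq q c + R q c)"
proof -
  have s1: "(\<Sum>y<k. q y) = 1" using q unfolding label_simplex_def by auto
  have "phiq k PP f q = (\<Sum>y<k. (1 / (2 * real k)) * (\<Sum>c<k. q y * (f c + LL c y)\<^sup>2))"
    unfolding phiq_def Phi_quad_def by (intro sum.cong refl) (simp add: sum_distrib_left mult_ac)
  also have "\<dots> = (1 / (2 * real k)) * (\<Sum>y<k. \<Sum>c<k. q y * (f c + LL c y)\<^sup>2)"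
    by (simp add: sum_distrib_left)
  also have "(\<Sum>y<k. \<Sum>c<k. q y * (f c + LL c y)\<^sup>2) = (\<Sum>c<k. \<Sum>y<k. q y * (f c + LL c y)\<^sup>2)"
    by (rule sum.swap)
  also have "\<dots> = (\<Sum>c<k. (f c)\<^sup>2 + 2 * f c * Lq q c + R q c)"
  proof (intro sum.cong refl)
    fix c
    have "(\<Sum>y<k. q y * (f c + LL c y)\<^sup>2)
        = (\<Sum>y<k. (f c)\<^sup>2 * q y + 2 * f c * (q y * LL c y) + q y * (LL c y)\<^sup>2)"
      by (intro sum.cong refl) (simp add: power2_sum algebra_simps)
    also have "\<dots> = (f c)\<^sup>2 * (\<Sum>y<k. q y) + 2 * f c * Lq q c + R q c"
      unfolding Lq_def R_def by (simp add: sum.distrib sum_distrib_left)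
    finally show "(\<Sum>y<k. q y * (f c + LL c y)\<^sup>2) = (f c)\<^sup>2 + 2 * f c * Lq q c + R q c"
      using s1 by simp
  qed
  finally show ?thesis .
qed

lemma phi_diff:
  assumes q: "q \<in> label_simplex k"
  shows "phiq k PP f q - phiq k PP g q
     = (1 / (2 * real k)) * ((\<Sum>c<k. (f c - g c)\<^sup>2) + 2 * (\<Sum>c<k. (f c - g c) * (g c + Lq q c)))"
proof -
  have "phiq k PP f q - phiq k PP g q = (1 / (2 * real k)) *
     ((\<Sum>c<k. (f c)\<^sup>2 + 2 * f c * Lq q c + R q c) - (\<Sum>c<k. (g c)\<^sup>2 + 2 * g c * Lq q c + R q c))"
    unfolding phi_eq[OF q] by (simp only: right_diff_distrib)
  also have "(\<Sum>c<k. (f c)\<^sup>2 + 2 * f c * Lq q c + R q c) - (\<Sum>c<k. (g c)\<^sup>2 + 2 * g c * Lq q c + R q c)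
     = (\<Sum>c<k. ((f c)\<^sup>2 + 2 * f c * Lq q c + R q c) - ((g c)\<^sup>2 + 2 * g c * Lq q c + R q c))"
    by (rule sum_subtractf[symmetric])
  also have "(\<Sum>c<k. ((f c)\<^sup>2 + 2 * f c * Lq q c + R q c) - ((g c)\<^sup>2 + 2 * g c * Lq q c + R q c))
      = (\<Sum>c<k. (f c - g c)\<^sup>2 + 2 * ((f c - g c) * (g c + Lq q c)))"
    by (intro sum.cong refl) (simp add: power2_eq_square algebra_simps)
  also have "\<dots> = (\<Sum>c<k. (f c - g c)\<^sup>2) + 2 * (\<Sum>c<k. (f c - g c) * (g c + Lq q c))"
    by (simp add: sum.distrib sum_distrib_left)
  finally show ?thesis .
qed

definition alpha :: real where "alpha = \<eta> * real b / real k + 1 - \<eta>"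

lemma alpha_eq: "alpha = \<eta> / real s + 1 - \<eta>"
  unfolding alpha_def using b2 s2 by (simp add: kbs field_simps)

lemma alpha_pos: "alpha > 0"
proof -
  have "\<eta> / real s \<ge> 0" using eta0 by simp
  show ?thesis
  proof (cases "\<eta> = 0")
    case True then show ?thesis unfolding alpha_eq by simp
  next
    case False
    then have "\<eta> / real s > 0" using eta0 s2 by simp
    then show ?thesis unfolding alpha_eq using eta1 by linarith
  qed
qed

definition fstar :: "(nat \<Rightarrow> real) \<Rightarrow> nat \<Rightarrow> real" where
  "fstar q c = (if c < k then -1 + alpha * Q q (blk c) else 0)"

lemma fstar_F: "fstar q \<in> FF"
  unfolding F_char fstar_def by auto

lemma orth:
  assumes q: "q \<in> label_simplex k" and d: "\<forall>c<k. dd c = \<delta> (blk c)"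
  shows "(\<Sum>c<k. dd c * (fstar q c + Lq q c)) = 0"
proof -
  have "(\<Sum>c<k. dd c * (fstar q c + Lq q c))
     = (\<Sum>c<k. (\<lambda>B. \<delta> B * (\<eta> / real s) * Q q B) (blk c)) - \<eta> * (\<Sum>c<k. \<delta> (blk c) * q c)"
    unfolding sum_distrib_left sum_subtractf[symmetric]
    by (intro sum.cong refl) (simp add: d fstar_def Lq_eq[OF q] alpha_eq algebra_simps)
  also have "\<dots> = (\<Sum>B<b. real s * (\<delta> B * (\<eta> / real s) * Q q B)) - \<eta> * (\<Sum>B<b. \<delta> B * Q q B)"
    using group1[of "\<lambda>B. \<delta> B * (\<eta> / real s) * Q q B"] group[of \<delta> q] by simp
  also have "\<dots> = 0" using s2 by (simp add: sum_distrib_left algebra_simps)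
  finally show ?thesis .
qed

lemma phi_gap:
  assumes q: "q \<in> label_simplex k" and f: "f \<in> FF"
  shows "phiq k PP f q - phiq k PP (fstar q) q = (1 / (2 * real k)) * (\<Sum>c<k. (f c - fstar q c)\<^sup>2)"
proof -
  obtain h where h: "\<forall>c<k. f c = h (blk c)" using f F_char by blast
  have "\<forall>c<k. f c - fstar q c = (\<lambda>B. h B - (-1 + alpha * Q q B)) (blk c)"
    using h by (simp add: fstar_def)
  from orth[OF q this] show ?thesis unfolding phi_diff[OF q] by simp
qed

lemma phi_INF:
  assumes q: "q \<in> label_simplex k"
  shows "(INF g\<in>FF. ereal (phiq k PP g q)) = ereal (phiq k PP (fstar q) q)"
proof (rule antisym)
  show "(INF g\<in>FF. ereal (phiq k PP g q)) \<le> ereal (phiq k PP (fstar q) q)"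
    using fstar_F by (rule INF_lower)
  show "ereal (phiq k PP (fstar q) q) \<le> (INF g\<in>FF. ereal (phiq k PP g q))"
  proof (rule INF_greatest)
    fix g assume "g \<in> FF"
    from phi_gap[OF q this] have "phiq k PP g q - phiq k PP (fstar q) q \<ge> 0"
      by (simp add: sum_nonneg)
    then show "ereal (phiq k PP (fstar q) q) \<le> ereal (phiq k PP g q)" by simp
  qed
qed

lemma excess_phi_eq:
  assumes q: "q \<in> label_simplex k" and f: "f \<in> FF"
  shows "excess_phi k PP FF f q = ereal ((1 / (2 * real k)) * (\<Sum>c<k. (f c - fstar q c)\<^sup>2))"
  unfolding excess_phi_def phi_INF[OF q] phi_gap[OF q f, symmetric] by simp

lemma excess_phi_blk:
  assumes q: "q \<in> label_simplex k" and f: "f \<in> FF" and h: "\<forall>c<k. f c = h (blk c)"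
  shows "excess_phi k PP FF f q = ereal ((1 / (2 * real b)) * (\<Sum>B<b. (h B + 1 - alpha * Q q B)\<^sup>2))"
proof -
  have "(\<Sum>c<k. (f c - fstar q c)\<^sup>2) = (\<Sum>c<k. (\<lambda>B. (h B + 1 - alpha * Q q B)\<^sup>2) (blk c))"
    using h by (intro sum.cong refl) (simp add: fstar_def algebra_simps)
  also have "\<dots> = real s * (\<Sum>B<b. (h B + 1 - alpha * Q q B)\<^sup>2)"
    using group1[of "\<lambda>B. (h B + 1 - alpha * Q q B)\<^sup>2"] by (simp add: sum_distrib_left)
  finally have e: "(\<Sum>c<k. (f c - fstar q c)\<^sup>2) = real s * (\<Sum>B<b. (h B + 1 - alpha * Q q B)\<^sup>2)" .
  have "(1 / (2 * real k)) * (real s * (\<Sum>B<b. (h B + 1 - alpha * Q q B)\<^sup>2))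
      = (1 / (2 * real b)) * (\<Sum>B<b. (h B + 1 - alpha * Q q B)\<^sup>2)"
    using s2 b2 by (simp add: kbs field_simps)
  then show ?thesis unfolding excess_phi_eq[OF q f] e by simp
qed


definition val :: "real \<Rightarrow> real" where
  "val \<epsilon> = (\<epsilon> - \<eta> / 2)\<^sup>2 / (4 * real b) * (\<eta> * real b / real k + 1 - \<eta>)\<^sup>2 / (1 - \<eta> / 2)\<^sup>2"

lemma val_alt: "val \<epsilon> = (alpha * ((\<epsilon> - \<eta> / 2) / (1 - \<eta> / 2)))\<^sup>2 / (4 * real b)"
proof -
  have gen: "(x::real)\<^sup>2 / z * a\<^sup>2 / y\<^sup>2 = (a * (x / y))\<^sup>2 / z" for x z a y
    by (simp add: power_mult_distrib power_divide mult.commute)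
  show ?thesis unfolding val_def alpha_def[symmetric] by (rule gen)
qed

lemma simplex_nonneg: "q \<in> label_simplex k \<Longrightarrow> c < k \<Longrightarrow> q c \<ge> 0"
  unfolding label_simplex_def by auto

lemma Q_nonneg: "q \<in> label_simplex k \<Longrightarrow> Q q j \<ge> 0"
  unfolding Q_def by (intro sum_nonneg) (auto simp: simplex_nonneg)

lemma Q_two:
  assumes q: "q \<in> label_simplex k" and ne: "B1 \<noteq> B2"
  shows "Q q B1 + Q q B2 \<le> 1"
proof -
  let ?S1 = "{c. c < k \<and> blk c = B1}" and ?S2 = "{c. c < k \<and> blk c = B2}"
  have "Q q B1 + Q q B2 = sum q (?S1 \<union> ?S2)"
    unfolding Q_def using ne by (subst sum.union_disjoint) auto
  also have "\<dots> \<le> sum q {..<k}"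
    by (rule sum_mono2) (auto simp: simplex_nonneg[OF q])
  also have "\<dots> = 1" using q unfolding label_simplex_def by auto
  finally show ?thesis .
qed

lemma q_le_Q: "q \<in> label_simplex k \<Longrightarrow> c < k \<Longrightarrow> q c \<le> Q q (blk c)"
  unfolding Q_def by (rule member_le_sum) (auto simp: simplex_nonneg)

lemma lower:
  assumes f: "f \<in> FF" and q: "q \<in> label_simplex k"
    and el: "excess_loss k LL FF f q \<ge> ereal \<epsilon>" and e0: "\<eta> / 2 \<le> \<epsilon>"
  shows "excess_phi k PP FF f q \<ge> ereal (val \<epsilon>)"
proof -
  obtain h where h: "\<forall>c<k. f c = h (blk c)" using f F_char by blast
  define e where "e B = (h B + 1 - alpha * Q q B)\<^sup>2" for B
  have ep: "excess_phi k PP FF f q = ereal ((1 / (2 * real b)) * (\<Sum>B<b. e B))"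
    unfolding e_def by (rule excess_phi_blk[OF q f h])
  show ?thesis
  proof (cases "\<epsilon> = \<eta> / 2")
    case True
    then have "val \<epsilon> = 0" unfolding val_def by simp
    moreover have "(\<Sum>B<b. e B) \<ge> 0" unfolding e_def by (simp add: sum_nonneg)
    ultimately show ?thesis unfolding ep by simp
  next
    case False
    then have epos: "\<epsilon> > \<eta> / 2" using e0 by simp
    then have epos': "\<epsilon> > 0" using eta0 by simp
    obtain g where g: "g \<in> FF" and gi: "(INF g\<in>FF. ereal (lossq k LL g q)) = ereal (lossq k LL g q)"
      using loss_INF[OF q] by blast
    have "ereal \<epsilon> \<le> ereal (lossq k LL f q - lossq k LL g q)"
      using el unfolding excess_loss_def gi by simp
    then have diff: "\<epsilon> \<le> Lq q (pred k f) - Lq q (pred k g)" by (simp add: lossq_eq)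
    define p1 where "p1 = pred k f"
    define p2 where "p2 = pred k g"
    have p1k: "p1 < k" and p2k: "p2 < k" unfolding p1_def p2_def using pred_props by auto
    have ne: "blk p1 \<noteq> blk p2"
    proof
      assume eq: "blk p1 = blk p2"
      have "p1 \<le> p2" unfolding p1_def using pred_blk[OF f p2k] eq p1_def by simp
      moreover have "p2 \<le> p1" unfolding p2_def using pred_blk[OF g p1k] eq p2_def by simp
      ultimately have "p1 = p2" by simp
      then show False using diff epos' unfolding p1_def p2_def by simp
    qed
    define Q1 where "Q1 = Q q (blk p1)"
    define Q2 where "Q2 = Q q (blk p2)"
    define D where "D = Q2 - Q1"
    have sumQ: "Q1 + Q2 \<le> 1" unfolding Q1_def Q2_def using Q_two[OF q ne] .
    have qp2: "q p2 \<le> Q2" unfolding Q2_def using q_le_Q[OF q p2k] .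
    have qp1: "q p1 \<ge> 0" using simplex_nonneg[OF q p1k] .
    have diff2: "\<epsilon> \<le> \<eta> * (q p2 - q p1) + (1 - \<eta>) * D"
      using diff unfolding p1_def[symmetric] p2_def[symmetric] Lq_eq[OF q p1k] Lq_eq[OF q p2k]
      unfolding D_def Q1_def Q2_def by (simp add: algebra_simps)
    have a1: "\<eta> * (q p2 - q p1) \<le> \<eta> * ((1 + D) / 2)"
      using qp2 qp1 sumQ eta0 unfolding D_def by (intro mult_left_mono) auto
    have "\<epsilon> - \<eta> / 2 \<le> D * (1 - \<eta> / 2)"
      using diff2 a1 by (simp add: algebra_simps)
    then have DD: "(\<epsilon> - \<eta> / 2) / (1 - \<eta> / 2) \<le> D"
      using eta1 by (simp add: pos_divide_le_eq)
    define D0 where "D0 = (\<epsilon> - \<eta> / 2) / (1 - \<eta> / 2)"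
    have D0pos: "D0 \<ge> 0" unfolding D0_def using epos eta1 by simp
    have hh: "h (blk p2) \<le> h (blk p1)"
      using pred_props[of f] h p1k p2k p1_def p2_def by metis
    define u where "u = h (blk p1) + 1 - alpha * Q1"
    define v where "v = h (blk p2) + 1 - alpha * Q2"
    have uv: "u - v \<ge> alpha * D0"
    proof -
      have "alpha * D0 \<le> alpha * D" unfolding D0_def by (rule mult_left_mono[OF DD]) (use alpha_pos in simp)
      then show ?thesis unfolding u_def v_def D_def using hh by (simp add: algebra_simps)
    qed
    have "(alpha * D0)\<^sup>2 \<le> (u - v)\<^sup>2"
      using uv alpha_pos D0pos by (intro power_mono) auto
    also have "(u - v)\<^sup>2 \<le> 2 * (u\<^sup>2 + v\<^sup>2)"
      using sum_squares_ge_zero[of "u + v" 0] by (simp add: power2_eq_square algebra_simps)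
    finally have uvb: "(alpha * D0)\<^sup>2 \<le> 2 * (u\<^sup>2 + v\<^sup>2)" .
    have "u\<^sup>2 + v\<^sup>2 = (\<Sum>B\<in>{blk p1, blk p2}. e B)"
      using ne unfolding e_def u_def v_def Q1_def Q2_def by simp
    also have "\<dots> \<le> (\<Sum>B<b. e B)"
      using blk_lt p1k p2k unfolding e_def by (intro sum_mono2) auto
    finally have "u\<^sup>2 + v\<^sup>2 \<le> (\<Sum>B<b. e B)" .
    then have "(alpha * D0)\<^sup>2 / (4 * real b) \<le> (1 / (2 * real b)) * (\<Sum>B<b. e B)"
      using uvb b2 by (simp add: field_simps)
    then show ?thesis unfolding ep val_alt D0_def[symmetric] by simp
  qed
qed


lemma witness:
  assumes e0: "\<eta> / 2 \<le> \<epsilon>" and e1: "\<epsilon> \<le> 1"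
  shows "\<exists>f q. f \<in> FF \<and> q \<in> label_simplex k \<and> excess_loss k LL FF f q \<ge> ereal \<epsilon>
           \<and> excess_phi k PP FF f q = ereal (val \<epsilon>)"
proof -
  define B1 where "B1 = blk 0"
  define B2 where "B2 = (if B1 = 0 then 1 else (0::nat))"
  have B1b: "B1 < b" unfolding B1_def using blk_lt kpos by auto
  have B2b: "B2 < b" unfolding B2_def using b2 by auto
  have B12: "B1 \<noteq> B2" unfolding B2_def by auto
  have cardB1: "card {c. c < k \<and> blk c = B1} = s" using card_blk B1b by auto
  obtain c1 where c1: "c1 < k" "blk c1 = B1" "c1 \<noteq> 0"
  proof -
    have "\<exists>c1. c1 < k \<and> blk c1 = B1 \<and> c1 \<noteq> 0"
    proof (rule ccontr)
      assume "\<not> ?thesis"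
      then have "{c. c < k \<and> blk c = B1} \<subseteq> {0}" by auto
      then have "card {c. c < k \<and> blk c = B1} \<le> 1"
        using card_mono[of "{0::nat}"] by fastforce
      then show False using cardB1 s2 by simp
    qed
    then show ?thesis using that by blast
  qed
  have cardB2: "card {c. c < k \<and> blk c = B2} = s" using card_blk B2b by auto
  have exB2: "\<exists>c. c < k \<and> blk c = B2"
  proof (rule ccontr)
    assume "\<not> ?thesis"
    then have "{c. c < k \<and> blk c = B2} = {}" by auto
    then have "card {c. c < k \<and> blk c = B2} = 0" by (simp only: card.empty)
    then show False using cardB2 s2 by linarith
  qed
  define m2 where "m2 = (LEAST c. c < k \<and> blk c = B2)"
  have m2: "m2 < k" "blk m2 = B2" using LeastI_ex[OF exB2] unfolding m2_def by auto
  have m2le: "c < k \<Longrightarrow> blk c = B2 \<Longrightarrow> m2 \<le> c" for c unfolding m2_def by (rule Least_le) auto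
  have m2c1: "m2 \<noteq> c1" using m2 c1 B12 by auto
  have m20: "m2 \<noteq> 0"
  proof
    assume "m2 = 0" then show False using m2(2) B12 B1_def by simp
  qed
  define D where "D = (\<epsilon> - \<eta> / 2) / (1 - \<eta> / 2)"
  have D0: "D \<ge> 0" unfolding D_def using e0 eta1 by simp
  have D1: "D \<le> 1" unfolding D_def using e1 eta1 by (simp add: divide_le_eq)
  have Deq: "\<eta> / 2 + D * (1 - \<eta> / 2) = \<epsilon>" unfolding D_def using eta1 by simp
  define x where "x = (1 - D) / 2"
  have x0: "x \<ge> 0" unfolding x_def using D1 by simp
  define q where "q c = (if c = c1 then x else 0) + (if c = m2 then x + D else 0)" for c
  have qsum: "(\<Sum>c<k. q c) = 1"
    unfolding q_def using c1 m2 by (simp add: sum.distrib x_def)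
  have qs: "q \<in> label_simplex k"
    unfolding label_simplex_def using qsum x0 D0 c1 m2 by (auto simp: q_def)
  have Qq: "Q q j = (if blk c1 = j then x else 0) + (if blk m2 = j then x + D else 0)" for j
  proof -
    have fin: "finite {c. c < k \<and> blk c = j}" by simp
    show ?thesis unfolding Q_def q_def sum.distrib using c1 m2
      by (simp add: sum.delta[OF fin])
  qed
  have Q1: "Q q B1 = x" using Qq c1 m2 B12 by simp
  have Q2: "Q q B2 = x + D" using Qq c1 m2 B12 by simp
  have Qo: "B \<noteq> B1 \<Longrightarrow> B \<noteq> B2 \<Longrightarrow> Q q B = 0" for B using Qq c1 m2 by simp
  have q0: "q 0 = 0" unfolding q_def using c1 m20 by simp
  have qm2: "q m2 = x + D" unfolding q_def using m2c1 by simp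
  define hf where "hf B = (if B = B1 \<or> B = B2 then -1 + alpha / 2 else -1)" for B
  define f where "f c = (if c < k then hf (blk c) else 0)" for c
  have fF: "f \<in> FF" unfolding F_char f_def by auto
  have predf: "pred k f = 0"
  proof -
    have "\<forall>c''<k. f c'' \<le> f 0"
      unfolding f_def hf_def using kpos alpha_pos B1_def by auto
    then show ?thesis using pred_least[of 0 f] kpos by simp
  qed
  define g where "g c = (if c < k \<and> blk c = B2 then 1 else (0::real))" for c
  have gF: "g \<in> FF" unfolding F_char g_def
    by (auto intro!: exI[of _ "\<lambda>B. if B = B2 then 1 else 0"])
  have predg: "pred k g = m2"
  proof (rule antisym)
    have "\<forall>c''<k. g c'' \<le> g m2" unfolding g_def using m2 by auto
    then show "pred k g \<le> m2" using pred_least[of m2 g] m2 by simp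
    have "g m2 \<le> g (pred k g)" "pred k g < k" using pred_props[of g] m2 by auto
    then have "blk (pred k g) = B2" using m2 unfolding g_def by (auto split: if_splits)
    then show "m2 \<le> pred k g" using m2le \<open>pred k g < k\<close> by simp
  qed
  obtain gs where gs: "gs \<in> FF" and gi: "(INF g\<in>FF. ereal (lossq k LL g q)) = ereal (lossq k LL gs q)"
    using loss_INF[OF qs] by blast
  have "ereal (lossq k LL gs q) \<le> ereal (lossq k LL g q)"
    unfolding gi[symmetric] using gF by (rule INF_lower)
  then have gsle: "lossq k LL gs q \<le> lossq k LL g q" by simp
  have lf: "lossq k LL f q = \<eta> + (1 - \<eta>) * (1 - x)"
    unfolding lossq_eq predf using Lq_eq[OF qs kpos] q0 Q1 B1_def by simp
  have lg: "lossq k LL g q = 1 - x - D"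
    unfolding lossq_eq predg using Lq_eq[OF qs m2(1)] qm2 m2 Q2 by (simp add: algebra_simps)
  have p1: "D * (1 - \<eta> / 2) = D - \<eta> * D / 2" by (simp add: algebra_simps)
  have p2: "\<eta> * x = \<eta> / 2 - \<eta> * D / 2" unfolding x_def by (simp add: right_diff_distrib diff_divide_distrib)
  have p3: "(1 - \<eta>) * (1 - x) = 1 - x - \<eta> + \<eta> * x" by (simp add: algebra_simps)
  have "\<epsilon> = lossq k LL f q - lossq k LL g q"
    unfolding lf lg using Deq p1 p2 p3 by linarith
  then have "\<epsilon> \<le> lossq k LL f q - lossq k LL gs q" using gsle by simp
  then have el: "excess_loss k LL FF f q \<ge> ereal \<epsilon>"
    unfolding excess_loss_def gi by simp
  have hfk: "\<forall>c<k. f c = hf (blk c)" unfolding f_def by simp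
  have termeq: "(hf B + 1 - alpha * Q q B)\<^sup>2
      = (if B = B1 then (alpha * D / 2)\<^sup>2 else 0) + (if B = B2 then (alpha * D / 2)\<^sup>2 else 0)" for B
  proof -
    consider "B = B1" | "B = B2" | "B \<noteq> B1 \<and> B \<noteq> B2" by blast
    then show ?thesis
    proof cases
      case 1
      have "hf B + 1 - alpha * Q q B = alpha * D / 2" unfolding 1 Q1 hf_def x_def by (simp add: field_simps)
      then have "(hf B + 1 - alpha * Q q B)\<^sup>2 = (alpha * D / 2)\<^sup>2" by (simp only:)
      then show ?thesis using 1 B12 by simp
    next
      case 2
      have "hf B + 1 - alpha * Q q B = - (alpha * D / 2)" unfolding 2 Q2 hf_def x_def by (simp add: field_simps)
      then have "(hf B + 1 - alpha * Q q B)\<^sup>2 = (alpha * D / 2)\<^sup>2" by (simp only: power2_minus)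
      then show ?thesis using 2 B12 by simp
    next
      case 3 then show ?thesis using Qo unfolding hf_def by simp
    qed
  qed
  have "(\<Sum>B<b. (hf B + 1 - alpha * Q q B)\<^sup>2) = 2 * (alpha * D / 2)\<^sup>2"
    unfolding termeq sum.distrib using B1b B2b by simp
  then have "excess_phi k PP FF f q = ereal ((1 / (2 * real b)) * (2 * (alpha * D / 2)\<^sup>2))"
    using excess_phi_blk[OF qs fF hfk] by simp
  also have "(1 / (2 * real b)) * (2 * (alpha * D / 2)\<^sup>2) = val \<epsilon>"
    unfolding val_alt D_def[symmetric] by (simp add: power2_eq_square field_simps)
  finally show ?thesis using fF qs el by blast
qed


lemma calib_ge:
  assumes "\<eta> / 2 \<le> \<epsilon>"
  shows "calib k PP LL FF \<epsilon> \<ge> ereal (val \<epsilon>)"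
  unfolding calib_def
proof (rule Inf_greatest)
  fix z assume "z \<in> {excess_phi k PP FF f q |f q. f \<in> FF \<and> q \<in> label_simplex k \<and> ereal \<epsilon> \<le> excess_loss k LL FF f q}"
  then obtain f q where "z = excess_phi k PP FF f q" "f \<in> FF" "q \<in> label_simplex k" "ereal \<epsilon> \<le> excess_loss k LL FF f q"
    by blast
  then show "ereal (val \<epsilon>) \<le> z" using lower assms by simp
qed

lemma calib_eq:
  assumes "\<eta> / 2 \<le> \<epsilon>" "\<epsilon> \<le> 1"
  shows "calib k PP LL FF \<epsilon> = ereal (val \<epsilon>)"
proof (rule antisym)
  obtain f q where w: "f \<in> FF" "q \<in> label_simplex k" "excess_loss k LL FF f q \<ge> ereal \<epsilon>"
    "excess_phi k PP FF f q = ereal (val \<epsilon>)" using witness[OF assms] by blast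
  show "calib k PP LL FF \<epsilon> \<le> ereal (val \<epsilon>)"
    unfolding calib_def w(4)[symmetric] by (rule Inf_lower) (use w in blast)
  show "calib k PP LL FF \<epsilon> \<ge> ereal (val \<epsilon>)" using calib_ge assms by simp
qed

lemma calib_zero:
  assumes "0 \<le> \<epsilon>" "\<epsilon> \<le> \<eta> / 2"
  shows "calib k PP LL FF \<epsilon> = 0"
proof (rule antisym)
  have h1: "\<eta> / 2 \<le> \<eta> / 2" "\<eta> / 2 \<le> 1" using eta1 by auto
  obtain f q where w: "f \<in> FF" "q \<in> label_simplex k" "excess_loss k LL FF f q \<ge> ereal (\<eta> / 2)"
    "excess_phi k PP FF f q = ereal (val (\<eta> / 2))" using witness[OF h1] by blast
  have v0: "val (\<eta> / 2) = 0" unfolding val_def by simp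
  have "ereal \<epsilon> \<le> ereal (\<eta> / 2)" using assms(2) by simp
  then have "excess_loss k LL FF f q \<ge> ereal \<epsilon>" using w(3) by (rule order_trans)
  then have mem: "excess_phi k PP FF f q \<in> {excess_phi k PP FF f q |f q. f \<in> FF \<and> q \<in> label_simplex k \<and> ereal \<epsilon> \<le> excess_loss k LL FF f q}"
    using w by blast
  have "excess_phi k PP FF f q \<le> 0" using w(4) v0 by simp
  then show "calib k PP LL FF \<epsilon> \<le> 0"
    unfolding calib_def by (rule Inf_lower2[OF mem])
  show "calib k PP LL FF \<epsilon> \<ge> 0"
    unfolding calib_def
  proof (rule Inf_greatest)
    fix z assume "z \<in> {excess_phi k PP FF f q |f q. f \<in> FF \<and> q \<in> label_simplex k \<and> ereal \<epsilon> \<le> excess_loss k LL FF f q}"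
    then obtain f q where "z = excess_phi k PP FF f q" "f \<in> FF" "q \<in> label_simplex k"
      by blast
    then show "0 \<le> z" using excess_phi_eq by (simp add: sum_nonneg)
  qed
qed

lemma val_pos: "\<epsilon> > \<eta> / 2 \<Longrightarrow> val \<epsilon> > 0"
  unfolding val_alt using alpha_pos eta1 b2 by simp

lemma consistent: "consistent_upto k PP LL FF (\<eta> / 2)"
  unfolding consistent_upto_def
proof (intro conjI allI impI)
  fix \<epsilon> :: real assume "\<epsilon> > \<eta> / 2"
  then have "0 < ereal (val \<epsilon>)" using val_pos by simp
  moreover have "ereal (val \<epsilon>) \<le> calib k PP LL FF \<epsilon>" using calib_ge \<open>\<epsilon> > \<eta> / 2\<close> by simp
  ultimately show "calib k PP LL FF \<epsilon> > 0" by (rule less_le_trans)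
next
  have "1 > \<eta> / 2" using eta1 by simp
  moreover have "\<bar>calib k PP LL FF 1\<bar> \<noteq> \<infinity>" using calib_eq[of 1] eta1 by simp
  ultimately show "\<exists>\<epsilon>'>\<eta> / 2. \<bar>calib k PP LL FF \<epsilon>'\<bar> \<noteq> \<infinity>" by (intro exI[of _ "1::real"] conjI)
qed

end

theorem proposition17:
  fixes k b s :: nat and blk :: "nat \<Rightarrow> nat" and \<eta> :: real
  assumes "b \<ge> 2" and "s \<ge> 2" and "k = b * s"
    and "\<forall>c<k. blk c < b"
    and "\<forall>j<b. card {c. c < k \<and> blk c = j} = s"
    and "0 \<le> \<eta>" and "\<eta> \<le> 1"
  shows "(\<forall>\<epsilon>. \<eta> / 2 \<le> \<epsilon> \<and> \<epsilon> \<le> 1 \<longrightarrow>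
            calib k (Phi_quad k (L01b_eta blk \<eta>)) (L01b_eta blk \<eta>) (col_span k (L01b blk)) \<epsilon>
            = ereal ((\<epsilon> - \<eta> / 2)\<^sup>2 / (4 * real b)
                     * (\<eta> * real b / real k + 1 - \<eta>)\<^sup>2 / (1 - \<eta> / 2)\<^sup>2))
       \<and> (\<forall>\<epsilon>. 0 \<le> \<epsilon> \<and> \<epsilon> \<le> \<eta> / 2 \<longrightarrow>
            calib k (Phi_quad k (L01b_eta blk \<eta>)) (L01b_eta blk \<eta>) (col_span k (L01b blk)) \<epsilon> = 0)
       \<and> consistent_upto k (Phi_quad k (L01b_eta blk \<eta>)) (L01b_eta blk \<eta>) (col_span k (L01b blk)) (\<eta> / 2)"
proof -
  interpret P: P17 k b s blk \<eta> using assms by unfold_locales auto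
  show ?thesis
  proof (intro conjI allI impI)
    fix \<epsilon> :: real assume "\<eta> / 2 \<le> \<epsilon> \<and> \<epsilon> \<le> 1"
    then show "calib k (Phi_quad k (L01b_eta blk \<eta>)) (L01b_eta blk \<eta>) (col_span k (L01b blk)) \<epsilon>
            = ereal ((\<epsilon> - \<eta> / 2)\<^sup>2 / (4 * real b)
                     * (\<eta> * real b / real k + 1 - \<eta>)\<^sup>2 / (1 - \<eta> / 2)\<^sup>2)"
      using P.calib_eq[of \<epsilon>] unfolding P.val_def by simp
  next
    fix \<epsilon> :: real assume "0 \<le> \<epsilon> \<and> \<epsilon> \<le> \<eta> / 2"
    then show "calib k (Phi_quad k (L01b_eta blk \<eta>)) (L01b_eta blk \<eta>) (col_span k (L01b blk)) \<epsilon> = 0"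
      using P.calib_zero[of \<epsilon>] by simp
  next
    show "consistent_upto k (Phi_quad k (L01b_eta blk \<eta>)) (L01b_eta blk \<eta>) (col_span k (L01b blk)) (\<eta> / 2)"
      by (rule P.consistent)
  qed
qed

end
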